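(* Let $\|\cdot\|$ be a norm on $\mathbb{R}^d$ and $T:\mathbb{R}^d\to\mathbb{R}^d$ a contraction with parameter $\gamma\in(0,1)$, i.e. $\|Tx-Ty\|\le\gamma\|x-y\|$, with unique fixed point $x^*$. Let $(\beta_n)_{n\ge1}\subseteq(0,1)$ be increasing, $x^0\in\mathbb{R}^d$, and $(x^n)$ generated by $x^n=(1-\beta_n)x^0+\beta_n(Tx^{n-1}+U_n)$, $n\ge1$, for arbitrary random vectors $U_n$. Then for every $n\ge1$, $$\|x^n-x^*\|\le\sum_{i=0}^n\gamma^{n-i}B_{i+1}^n\bigl((1-\beta_i)\|x^0-x^*\|+\beta_i\|U_i\|\bigr).$$
   Context: Notation: $B_i^n:=\prod_{j=i}^n\beta_j$ with $B_i^n=1$ if $i>n$; convention $\beta_0=0$ (so the $i=0$ term equals $\gamma^nB_1^n\|x^0-x^*\|$). *)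

theory Defs
  imports "HOL-Analysis.Analysis"
begin

definition is_norm :: "('a::real_vector \<Rightarrow> real) \<Rightarrow> bool" where
  "is_norm N \<longleftrightarrow> (\<forall>x. N x \<ge> 0) \<and> (\<forall>x. N x = 0 \<longleftrightarrow> x = 0)
     \<and> (\<forall>c x. N (c *\<^sub>R x) = \<bar>c\<bar> * N x) \<and> (\<forall>x y. N (x + y) \<le> N x + N y)"

definition Bprod :: "(nat \<Rightarrow> real) \<Rightarrow> nat \<Rightarrow> nat \<Rightarrow> real" where
  "Bprod \<beta> i n = (\<Prod>j=i..n. \<beta> j)"

end

theory Submission
  imports Defs
begin

lemma Bprod_Suc: "i \<le> Suc n \<Longrightarrow> Bprod \<beta> i (Suc n) = Bprod \<beta> i n * \<beta> (Suc n)"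
  unfolding Bprod_def by (simp add: prod.nat_ivl_Suc')

theorem proposition2:
  fixes N :: "real ^ 'd \<Rightarrow> real"
    and T :: "real ^ 'd \<Rightarrow> real ^ 'd"
    and \<gamma> :: real and xstar :: "real ^ 'd"
    and \<beta> :: "nat \<Rightarrow> real"
    and U x :: "nat \<Rightarrow> real ^ 'd"
    and n :: nat
  assumes "is_norm N"
    and "0 < \<gamma>" and "\<gamma> < 1"
    and "\<forall>y z. N (T y - T z) \<le> \<gamma> * N (y - z)"
    and "T xstar = xstar"
    and "\<forall>k\<ge>1. 0 < \<beta> k \<and> \<beta> k < 1"
    and "\<forall>k\<ge>1. \<beta> k \<le> \<beta> (Suc k)"
    and "\<forall>k\<ge>1. x k = (1 - \<beta> k) *\<^sub>R x 0 + \<beta> k *\<^sub>R (T (x (k - 1)) + U k)"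
    and "n \<ge> 1"
  shows "N (x n - xstar) \<le>
      \<gamma> ^ n * Bprod \<beta> 1 n * N (x 0 - xstar)
      + (\<Sum>i=1..n. \<gamma> ^ (n - i) * Bprod \<beta> (i + 1) n
           * ((1 - \<beta> i) * N (x 0 - xstar) + \<beta> i * N (U i)))"
proof -
  define e0 where "e0 = N (x 0 - xstar)"
  define R where "R m = \<gamma> ^ m * Bprod \<beta> 1 m * e0
      + (\<Sum>i=1..m. \<gamma> ^ (m - i) * Bprod \<beta> (i + 1) m
           * ((1 - \<beta> i) * e0 + \<beta> i * N (U i)))" for m
  have Nadd: "\<And>a b. N (a + b) \<le> N a + N b" and Nsc: "\<And>c a. N (c *\<^sub>R a) = \<bar>c\<bar> * N a"
    using assms(1) unfolding is_norm_def by auto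
  have step: "N (x (Suc m) - xstar) \<le> (1 - \<beta> (Suc m)) * e0 + \<beta> (Suc m) * (\<gamma> * N (x m - xstar))
      + \<beta> (Suc m) * N (U (Suc m))" for m
  proof -
    have b: "0 < \<beta> (Suc m)" "\<beta> (Suc m) < 1" using assms(6) by auto
    have "x (Suc m) - xstar = (1 - \<beta> (Suc m)) *\<^sub>R (x 0 - xstar)
        + (\<beta> (Suc m) *\<^sub>R (T (x m) - T xstar) + \<beta> (Suc m) *\<^sub>R U (Suc m))"
    proof -
      have "x (Suc m) = (1 - \<beta> (Suc m)) *\<^sub>R x 0 + \<beta> (Suc m) *\<^sub>R (T (x m) + U (Suc m))"
        using assms(8) by (metis diff_Suc_1 le_add1 plus_1_eq_Suc)
      thus ?thesis using assms(5) by (simp add: algebra_simps)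
    qed
    hence "N (x (Suc m) - xstar) \<le> N ((1 - \<beta> (Suc m)) *\<^sub>R (x 0 - xstar))
        + (N (\<beta> (Suc m) *\<^sub>R (T (x m) - T xstar)) + N (\<beta> (Suc m) *\<^sub>R U (Suc m)))"
    proof -
      have "N (\<beta> (Suc m) *\<^sub>R (T (x m) - T xstar) + \<beta> (Suc m) *\<^sub>R U (Suc m))
         \<le> N (\<beta> (Suc m) *\<^sub>R (T (x m) - T xstar)) + N (\<beta> (Suc m) *\<^sub>R U (Suc m))" by (rule Nadd)
      moreover note Nadd[of "(1 - \<beta> (Suc m)) *\<^sub>R (x 0 - xstar)" "\<beta> (Suc m) *\<^sub>R (T (x m) - T xstar) + \<beta> (Suc m) *\<^sub>R U (Suc m)"]
      ultimately show ?thesis by (simp only: \<open>x (Suc m) - xstar = _\<close>)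
    qed
    also have "\<dots> = (1 - \<beta> (Suc m)) * e0 + \<beta> (Suc m) * N (T (x m) - T xstar)
        + \<beta> (Suc m) * N (U (Suc m))"
      using b by (simp add: Nsc e0_def)
    also have "\<dots> \<le> (1 - \<beta> (Suc m)) * e0 + \<beta> (Suc m) * (\<gamma> * N (x m - xstar))
        + \<beta> (Suc m) * N (U (Suc m))"
      using b assms(4) by (simp add: mult_left_mono)
    finally show ?thesis .
  qed
  have RSuc: "R (Suc m) = \<gamma> * \<beta> (Suc m) * R m + ((1 - \<beta> (Suc m)) * e0 + \<beta> (Suc m) * N (U (Suc m)))" for m
  proof -
    have s: "(\<Sum>i=1..m. \<gamma> ^ (Suc m - i) * Bprod \<beta> (i + 1) (Suc m)
           * ((1 - \<beta> i) * e0 + \<beta> i * N (U i))) =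
          \<gamma> * \<beta> (Suc m) * (\<Sum>i=1..m. \<gamma> ^ (m - i) * Bprod \<beta> (i + 1) m
           * ((1 - \<beta> i) * e0 + \<beta> i * N (U i)))"
      unfolding sum_distrib_left
    proof (rule sum.cong)
      fix i assume "i \<in> {1..m}"
      hence "Suc m - i = Suc (m - i)" "i + 1 \<le> Suc m" by auto
      thus "\<gamma> ^ (Suc m - i) * Bprod \<beta> (i + 1) (Suc m) * ((1 - \<beta> i) * e0 + \<beta> i * N (U i)) =
         \<gamma> * \<beta> (Suc m) * (\<gamma> ^ (m - i) * Bprod \<beta> (i + 1) m * ((1 - \<beta> i) * e0 + \<beta> i * N (U i)))"
        by (simp add: Bprod_Suc)
    qed simp
    have "Bprod \<beta> (Suc m + 1) (Suc m) = 1" by (simp add: Bprod_def)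
    thus ?thesis unfolding R_def using s
      by (simp add: Bprod_Suc algebra_simps)
  qed
  have main: "N (x m - xstar) \<le> R m" for m
  proof (induction m)
    case 0 thus ?case by (simp add: R_def Bprod_def e0_def)
  next
    case (Suc m)
    have b: "0 < \<beta> (Suc m)" using assms(6) by auto
    have "\<beta> (Suc m) * (\<gamma> * N (x m - xstar)) \<le> \<beta> (Suc m) * (\<gamma> * R m)"
      using Suc b assms(2) by (simp add: mult_left_mono)
    with step[of m] show ?case unfolding RSuc by (simp add: algebra_simps)
  qed
  show ?thesis using main[of n] unfolding R_def e0_def .
qed

end
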